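(* For every dimension $d\geq 2$ and every $0<p<1/2$, every branching point of every solution to the Gilbert--Steiner problem in $\mathbb{R}^d$ with cost $c(x)=x^p$ has degree three (only triple branching occurs).
   Context: Let $\mu^+,\mu^-$ be finite measures on $\mathbb{R}^d$ with finite supports and equal total mass. A $(\mu^+,\mu^-)$-flow consists of a finite vertex set $V\subset\mathbb{R}^d$ containing the support of $\mu^+-\mu^-$, a finite set $E$ of unordered pairs $\{x,y\}\subset V$, and non-zero reals $m(x,y)=-m(y,x)$ on edges such that $\mu^+-\mu^-=\sum_{\{x,y\}\in E} m(x,y)(\delta_y-\delta_x)$. The Gilbert functional is $\sum_{\{x,y\}\in E}|m(x,y)|^p\,|x-y|$; a solution of the Gilbert--Steiner problem is a flow minimizing it. Branching points are vertices not in $\operatorname{supp}\mu^+\cup\operatorname{supp}\mu^-$; branching points of degree 2 are understood to be eliminated by merging their two edges. *)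

theory Defs
  imports "HOL-Analysis.Analysis"
begin

text \<open>Finite measures with finite support on a Euclidean space are represented by
their point masses \<open>\<mu> :: 'a \<Rightarrow> real\<close>.\<close>

definition supp_fun :: "('a \<Rightarrow> real) \<Rightarrow> 'a set" where
  "supp_fun \<mu> = {x. \<mu> x \<noteq> 0}"

definition fin_measure :: "('a \<Rightarrow> real) \<Rightarrow> bool" where
  "fin_measure \<mu> \<longleftrightarrow> (\<forall>x. 0 \<le> \<mu> x) \<and> finite (supp_fun \<mu>)"

text \<open>A \<open>(\<mu>\<^sup>+,\<mu>\<^sup>-)\<close>-flow: vertex set \<open>V\<close>, edges \<open>E\<close> (unordered pairs of distinct
vertices), antisymmetric non-zero multiplicities \<open>m\<close> on edges, and the balance
condition \<open>\<mu>\<^sup>+ - \<mu>\<^sup>- = \<Sum>\<^bsub>{x,y}\<in>E\<^esub> m(x,y)(\<delta>\<^sub>y - \<delta>\<^sub>x)\<close>, evaluated pointwise at each z.\<close>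

definition is_flow ::
  "('a \<Rightarrow> real) \<Rightarrow> ('a \<Rightarrow> real) \<Rightarrow> 'a set \<Rightarrow> 'a set set \<Rightarrow> ('a \<Rightarrow> 'a \<Rightarrow> real) \<Rightarrow> bool" where
  "is_flow \<mu>p \<mu>m V E m \<longleftrightarrow>
     finite V \<and>
     supp_fun (\<lambda>x. \<mu>p x - \<mu>m x) \<subseteq> V \<and>
     (\<forall>e\<in>E. \<exists>x y. e = {x, y} \<and> x \<noteq> y \<and> x \<in> V \<and> y \<in> V \<and> m x y \<noteq> 0) \<and>
     (\<forall>x y. m x y = - m y x) \<and>
     (\<forall>z. \<mu>p z - \<mu>m z =
           (\<Sum>e\<in>E. (if z \<in> e then (\<Sum>x\<in>e - {z}. m x z) else 0)))"

definition darts :: "'a set set \<Rightarrow> ('a \<times> 'a) set" where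
  "darts E = {(x, y). x \<noteq> y \<and> {x, y} \<in> E}"

text \<open>Gilbert functional \<open>\<Sum>\<^bsub>{x,y}\<in>E\<^esub> |m(x,y)|^p |x-y|\<close>; every unordered edge is counted
twice in \<open>darts E\<close>, hence the factor 1/2.\<close>

definition gilbert_cost ::
  "real \<Rightarrow> 'a::real_normed_vector set set \<Rightarrow> ('a \<Rightarrow> 'a \<Rightarrow> real) \<Rightarrow> real" where
  "gilbert_cost p E m = (1/2) * (\<Sum>(x, y)\<in>darts E. \<bar>m x y\<bar> powr p * dist x y)"

definition gilbert_steiner_solution ::
  "real \<Rightarrow> ('a::real_normed_vector \<Rightarrow> real) \<Rightarrow> ('a \<Rightarrow> real) \<Rightarrow> 'a set \<Rightarrow> 'a set set
     \<Rightarrow> ('a \<Rightarrow> 'a \<Rightarrow> real) \<Rightarrow> bool" where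
  "gilbert_steiner_solution p \<mu>p \<mu>m V E m \<longleftrightarrow>
     is_flow \<mu>p \<mu>m V E m \<and>
     (\<forall>V' E' m'. is_flow \<mu>p \<mu>m V' E' m' \<longrightarrow> gilbert_cost p E m \<le> gilbert_cost p E' m')"

definition vdegree :: "'a set set \<Rightarrow> 'a \<Rightarrow> nat" where
  "vdegree E v = card {e\<in>E. v \<in> e}"

text \<open>Branching points: vertices outside \<open>supp \<mu>\<^sup>+ \<union> supp \<mu>\<^sup>-\<close> that carry at least one edge
(isolated vertices of \<open>V\<close> are irrelevant to the flow).\<close>

definition branching_point ::
  "('a \<Rightarrow> real) \<Rightarrow> ('a \<Rightarrow> real) \<Rightarrow> 'a set \<Rightarrow> 'a set set \<Rightarrow> 'a \<Rightarrow> bool" where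
  "branching_point \<mu>p \<mu>m V E v \<longleftrightarrow>
     v \<in> V \<and> v \<notin> supp_fun \<mu>p \<union> supp_fun \<mu>m \<and> vdegree E v \<ge> 1"

end

theory Submission
  imports Defs
begin

lemma powr_dec_diff:
  fixes r y s t :: real
  assumes r: "r < 0" and y: "y > 0" and s: "0 < s" and st: "s < t"
  shows "t powr r - (t+y) powr r < s powr r - (s+y) powr r"
proof -
  have "(\<lambda>u. u powr r - (u+y) powr r) s > (\<lambda>u. u powr r - (u+y) powr r) t"
  proof (rule DERIV_neg_imp_decreasing_open[OF st])
    fix u assume u: "s < u" "u < t"
    have d: "DERIV (\<lambda>u. u powr r - (u+y) powr r) u :> r * u powr (r-1) - r * (u+y) powr (r-1)"
      using u s y by (auto intro!: derivative_eq_intros)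
    have "(u+y) powr (r-1) < u powr (r-1)"
      using powr_less_mono2_neg[of "r-1" u "u+y"] u s y r by auto
    then have "r * u powr (r-1) - r * (u+y) powr (r-1) < 0"
      using r by (simp add: algebra_simps mult_less_cancel_left_neg)
    then show "\<exists>z. DERIV (\<lambda>u. u powr r - (u+y) powr r) u :> z \<and> z < 0" using d by blast
  next
    show "continuous_on {s..t} (\<lambda>u. u powr r - (u+y) powr r)"
      using s y by (auto intro!: continuous_intros)
  qed
  then show ?thesis by simp
qed

lemma hlawka_pos:
  fixes q x y z :: real
  assumes q: "0 < q" "q < 1" and x: "x > 0" and y: "y > 0" and z: "z > 0"
  shows "(x+y) powr q + (x+z) powr q + (y+z) powr q < x powr q + y powr q + z powr q + (x+y+z) powr q"
proof -
  define \<phi> where "\<phi> = (\<lambda>u::real. u powr q + (u+y+z) powr q - (u+y) powr q - (u+z) powr q)"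
  have "\<phi> 0 < \<phi> x"
  proof (rule DERIV_pos_imp_increasing_open[OF x])
    fix u assume u: "0 < u" "u < x"
    have d: "DERIV \<phi> u :> q * u powr (q-1) + q * (u+y+z) powr (q-1) - q * (u+y) powr (q-1) - q * (u+z) powr (q-1)"
      unfolding \<phi>_def using u y z by (auto intro!: derivative_eq_intros)
    have "(u+z) powr (q-1) - (u+z+y) powr (q-1) < u powr (q-1) - (u+y) powr (q-1)"
      using powr_dec_diff[of "q-1" y u "u+z"] q u y z by auto
    then have "0 < q * (u powr (q-1) + (u+y+z) powr (q-1) - (u+y) powr (q-1) - (u+z) powr (q-1))"
      using q by (intro mult_pos_pos) (auto simp: algebra_simps)
    then show "\<exists>l. DERIV \<phi> u :> l \<and> 0 < l" using d by (auto simp: algebra_simps)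
  next
    show "continuous_on {0..x} \<phi>"
      unfolding \<phi>_def using y z q by (auto intro!: continuous_intros continuous_on_powr')
  qed
  then show ?thesis unfolding \<phi>_def using q by (simp add: algebra_simps)
qed

lemma powr_subadd_strict:
  fixes a b q :: real
  assumes q: "0 < q" "q < 1" and a: "a > 0" and b: "b > 0"
  shows "(a+b) powr q < a powr q + b powr q"
proof -
  define s where "s = a + b"
  have s: "s > 0" using a b s_def by simp
  have 1: "a/s < (a/s) powr q"
    using powr_less_mono'[of "a/s" q 1] q a b s_def by (simp add: field_simps)
  have 2: "b/s < (b/s) powr q"
    using powr_less_mono'[of "b/s" q 1] q a b s_def by (simp add: field_simps)
  have "a/s + b/s = 1" using s_def s by (simp add: add_divide_distrib[symmetric])
  then have "1 < (a/s) powr q + (b/s) powr q" using 1 2 by linarith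
  then have "1 < (a powr q + b powr q) / s powr q"
    using a b s by (simp add: powr_divide add_divide_distrib)
  then show ?thesis using s s_def by (simp add: field_simps)
qed

lemma powr_subadd:
  fixes a b q :: real
  assumes q: "0 < q" "q < 1" and a: "a \<ge> 0" and b: "b \<ge> 0"
  shows "(a+b) powr q \<le> a powr q + b powr q"
  using powr_subadd_strict[OF q, of a b] a b q by (cases "a = 0"; cases "b = 0") auto

lemma c2_core:
  fixes a b c d q :: real
  assumes q: "0 < q" "q < 1" and pos: "a > 0" "b > 0" "c > 0" "d > 0"
    and sum: "a + b = c + d" and mx: "a \<ge> b" "a \<ge> c" "a \<ge> d"
  shows "(a+b) powr q + \<bar>a-c\<bar> powr q + \<bar>b-c\<bar> powr q < a powr q + b powr q + c powr q + d powr q"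
proof -
  have e1: "\<bar>a-c\<bar> = d - b" "\<bar>b-c\<bar> = c - b" using sum mx by auto
  have "(d-b) powr q \<le> d powr q" using mx sum pos q by (intro powr_mono2) auto
  moreover have "(c-b) powr q \<le> c powr q" using mx sum pos q by (intro powr_mono2) auto
  moreover have "(a+b) powr q < a powr q + b powr q" using powr_subadd_strict q pos by auto
  ultimately show ?thesis using e1 by simp
qed

lemma c2:
  fixes a b c d q :: real
  assumes q: "0 < q" "q < 1" and pos: "a > 0" "b > 0" "c > 0" "d > 0"
    and sum: "a + b = c + d"
  shows "(a+b) powr q + \<bar>a-c\<bar> powr q + \<bar>b-c\<bar> powr q < a powr q + b powr q + c powr q + d powr q"
proof -
  consider "a \<ge> b \<and> a \<ge> c \<and> a \<ge> d" | "b \<ge> a \<and> b \<ge> c \<and> b \<ge> d" | "c \<ge> a \<and> c \<ge> b \<and> c \<ge> d"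
    | "d \<ge> a \<and> d \<ge> b \<and> d \<ge> c" by linarith
  then show ?thesis
  proof cases
    case 1 then show ?thesis using c2_core[OF q pos sum] by auto
  next
    case 2 then show ?thesis using c2_core[OF q pos(2,1,3,4)] sum by (auto simp: add.commute)
  next
    case 3
    have "d - a = b - c" using sum by linarith
    then have "\<bar>d-a\<bar> powr q = \<bar>b-c\<bar> powr q" by simp
    moreover have "\<bar>c-a\<bar> powr q = \<bar>a-c\<bar> powr q" by (simp add: abs_minus_commute)
    moreover have "(c+d) powr q = (a+b) powr q" using sum by simp
    ultimately show ?thesis using 3 c2_core[OF q pos(3,4,1,2)] sum by linarith
  next
    case 4
    have "d - a = b - c" using sum by linarith
    then have "\<bar>d-a\<bar> powr q = \<bar>b-c\<bar> powr q" by simp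
    moreover have "\<bar>c-a\<bar> powr q = \<bar>a-c\<bar> powr q" by (simp add: abs_minus_commute)
    moreover have "(d+c) powr q = (a+b) powr q" using sum by (simp add: add.commute)
    ultimately show ?thesis using 4 c2_core[OF q pos(4,3,1,2)] sum by linarith
  qed
qed

lemma hl_pos3:
  fixes q x y z w :: real
  assumes q: "0 < q" "q < 1" and p: "x > 0" "y > 0" "z > 0" and s: "x + y + z + w = 0"
  shows "\<bar>x+y\<bar> powr q + \<bar>x+z\<bar> powr q + \<bar>y+z\<bar> powr q < \<bar>x\<bar> powr q + \<bar>y\<bar> powr q + \<bar>z\<bar> powr q + \<bar>w\<bar> powr q"
proof -
  have "\<bar>w\<bar> = x+y+z" using s p by auto
  then show ?thesis using hlawka_pos[OF q p] p by simp
qed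

lemma c2':
  fixes q x y z w :: real
  assumes q: "0 < q" "q < 1" and p: "x > 0" "y > 0" "z < 0" "w < 0" and s: "x + y + z + w = 0"
  shows "\<bar>x+y\<bar> powr q + \<bar>x+z\<bar> powr q + \<bar>y+z\<bar> powr q < \<bar>x\<bar> powr q + \<bar>y\<bar> powr q + \<bar>z\<bar> powr q + \<bar>w\<bar> powr q"
proof -
  have "\<bar>x+y\<bar> = x + y" "x - -z = x + z" "y - - z = y + z" "\<bar>z\<bar> = -z" "\<bar>w\<bar> = -w" using p by auto
  then show ?thesis using c2[of q x y "-z" "-w"] q p s by simp
qed

lemma absneg: "a = - b \<Longrightarrow> \<bar>a\<bar> powr q = \<bar>b\<bar> powr q" for a b q :: real by simp

lemma hl4:
  fixes q x y z w :: real
  assumes q: "0 < q" "q < 1" and nz: "x \<noteq> 0" "y \<noteq> 0" "z \<noteq> 0" "w \<noteq> 0" and s: "x + y + z + w = 0"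
  shows "\<bar>x+y\<bar> powr q + \<bar>x+z\<bar> powr q + \<bar>y+z\<bar> powr q < \<bar>x\<bar> powr q + \<bar>y\<bar> powr q + \<bar>z\<bar> powr q + \<bar>w\<bar> powr q"
proof -
  have A1: "\<bar>x+w\<bar> powr q = \<bar>y+z\<bar> powr q" by (rule absneg) (use s in linarith)
  have A2: "\<bar>y+w\<bar> powr q = \<bar>x+z\<bar> powr q" by (rule absneg) (use s in linarith)
  have A3: "\<bar>z+w\<bar> powr q = \<bar>x+y\<bar> powr q" by (rule absneg) (use s in linarith)
  have A4: "\<bar>w+x\<bar> powr q = \<bar>y+z\<bar> powr q" by (rule absneg) (use s in linarith)
  have A5: "\<bar>w+y\<bar> powr q = \<bar>x+z\<bar> powr q" by (rule absneg) (use s in linarith)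
  have A6: "\<bar>w+z\<bar> powr q = \<bar>x+y\<bar> powr q" by (rule absneg) (use s in linarith)
  have A7: "\<bar>y+x\<bar> powr q = \<bar>x+y\<bar> powr q" "\<bar>z+x\<bar> powr q = \<bar>x+z\<bar> powr q" "\<bar>z+y\<bar> powr q = \<bar>y+z\<bar> powr q"
    by (simp_all add: add.commute)
  note A = A1 A2 A3 A4 A5 A6 A7
  have B: "\<bar>-a + -b\<bar> = \<bar>a+b\<bar>" "\<bar>-a\<bar> = \<bar>a\<bar>" for a b :: real by auto
  have sw: "x+y+w+z = 0" "x+z+w+y = 0" "y+z+w+x = 0" "-x + -y + -z + -w = 0"
    "-x + -y + -w + -z = 0" "-x + -z + -w + -y = 0" "-y + -z + -w + -x = 0"
    "x+z+y+w = 0" "x+w+y+z = 0" "z+w+x+y = 0" "y+w+x+z = 0" "y+z+x+w = 0" using s by linarith+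
  consider "x > 0" "y > 0" "z > 0" | "x > 0" "y > 0" "w > 0" | "x > 0" "z > 0" "w > 0" | "y > 0" "z > 0" "w > 0"
    | "x < 0" "y < 0" "z < 0" | "x < 0" "y < 0" "w < 0" | "x < 0" "z < 0" "w < 0" | "y < 0" "z < 0" "w < 0"
    | "x > 0" "y > 0" "z < 0" "w < 0" | "x > 0" "z > 0" "y < 0" "w < 0" | "x > 0" "w > 0" "y < 0" "z < 0"
    | "x < 0" "y < 0" "z > 0" "w > 0" | "x < 0" "z < 0" "y > 0" "w > 0" | "x < 0" "w < 0" "y > 0" "z > 0"
  proof -
    have sx: "x > 0 \<or> x < 0" "y > 0 \<or> y < 0" "z > 0 \<or> z < 0" "w > 0 \<or> w < 0" using nz by auto
    have ne: "\<not> (x > 0 \<and> y > 0 \<and> z > 0 \<and> w > 0)" "\<not> (x < 0 \<and> y < 0 \<and> z < 0 \<and> w < 0)" using s by linarith+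
    show ?thesis using sx ne that by blast
  qed
  then show ?thesis
  proof cases
    case 1 then show ?thesis using hl_pos3[OF q 1 s] by simp
  next
    case 2 from hl_pos3[OF q 2 sw(1)] show ?thesis using A by linarith
  next
    case 3 from hl_pos3[OF q 3 sw(2)] show ?thesis using A by linarith
  next
    case 4 from hl_pos3[OF q 4 sw(3)] show ?thesis using A by linarith
  next
    case 5
    have "-x > 0" "-y > 0" "-z > 0" using 5 by auto
    from hl_pos3[OF q this sw(4)] show ?thesis by (simp only: B; use A in linarith)
  next
    case 6
    have "-x > 0" "-y > 0" "-w > 0" using 6 by auto
    from hl_pos3[OF q this sw(5)] show ?thesis by (simp only: B; use A in linarith)
  next
    case 7
    have "-x > 0" "-z > 0" "-w > 0" using 7 by auto
    from hl_pos3[OF q this sw(6)] show ?thesis by (simp only: B; use A in linarith)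
  next
    case 8
    have "-y > 0" "-z > 0" "-w > 0" using 8 by auto
    from hl_pos3[OF q this sw(7)] show ?thesis by (simp only: B; use A in linarith)
  next
    case 9 from c2'[OF q 9 s] show ?thesis using A by linarith
  next
    case 10 from c2'[OF q 10 sw(8)] show ?thesis using A by linarith
  next
    case 11 from c2'[OF q 11 sw(9)] show ?thesis using A by linarith
  next
    case 12 from c2'[OF q 12(3,4,1,2) sw(10)] show ?thesis using A by linarith
  next
    case 13 from c2'[OF q 13(3,4,1,2) sw(11)] show ?thesis using A by linarith
  next
    case 14 from c2'[OF q 14(3,4,1,2) sw(12)] show ?thesis using A by linarith
  qed
qed

lemma hl_le:
  fixes q x y z :: real
  assumes q: "0 < q" "q < 1"
  shows "\<bar>x+y\<bar> powr q + \<bar>x+z\<bar> powr q + \<bar>y+z\<bar> powr q \<le> \<bar>x\<bar> powr q + \<bar>y\<bar> powr q + \<bar>z\<bar> powr q + \<bar>x+y+z\<bar> powr q"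
proof -
  consider "x = 0" | "y = 0" | "z = 0" | "x + y + z = 0" | "x \<noteq> 0" "y \<noteq> 0" "z \<noteq> 0" "x + y + z \<noteq> 0" by blast
  then show ?thesis
  proof cases
    case 4
    then have "\<bar>x+y\<bar> = \<bar>z\<bar>" "\<bar>x+z\<bar> = \<bar>y\<bar>" "\<bar>y+z\<bar> = \<bar>x\<bar>" by linarith+
    then show ?thesis using 4 by simp
  next
    case 5
    have "\<bar>-(x+y+z)\<bar> = \<bar>x+y+z\<bar>" by simp
    moreover have "-(x+y+z) \<noteq> 0" "x + y + z + -(x+y+z) = 0" using 5 by auto
    note hl4[OF q 5(1,2,3) this]
    ultimately show ?thesis by simp
  qed simp_all
qed

definition PS :: "real \<Rightarrow> 'b set \<Rightarrow> ('b \<Rightarrow> real) \<Rightarrow> real" where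
  "PS q N f = (\<Sum>x\<in>N. \<Sum>y\<in>N-{x}. \<bar>f x + f y\<bar> powr q)"

definition HS :: "real \<Rightarrow> 'b set \<Rightarrow> ('b \<Rightarrow> real) \<Rightarrow> real" where
  "HS q N f = (\<Sum>x\<in>N. \<bar>f x\<bar> powr q)"

lemma PS_empty: "PS q {} f = 0" by (simp add: PS_def)

lemma PS_insert:
  assumes "finite N" "a \<notin> N"
  shows "PS q (insert a N) f = PS q N f + 2 * (\<Sum>y\<in>N. \<bar>f a + f y\<bar> powr q)"
proof -
  have "PS q (insert a N) f = (\<Sum>y\<in>N. \<bar>f a + f y\<bar> powr q) + (\<Sum>x\<in>N. \<Sum>y\<in>insert a N-{x}. \<bar>f x + f y\<bar> powr q)"
    unfolding PS_def using assms by (simp add: sum.insert)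
  also have "(\<Sum>x\<in>N. \<Sum>y\<in>insert a N-{x}. \<bar>f x + f y\<bar> powr q) = (\<Sum>x\<in>N. \<bar>f x + f a\<bar> powr q + (\<Sum>y\<in>N-{x}. \<bar>f x + f y\<bar> powr q))"
  proof (rule sum.cong[OF refl])
    fix x assume x: "x \<in> N"
    then have "insert a N - {x} = insert a (N - {x})" using assms by auto
    then show "(\<Sum>y\<in>insert a N-{x}. \<bar>f x + f y\<bar> powr q) = \<bar>f x + f a\<bar> powr q + (\<Sum>y\<in>N-{x}. \<bar>f x + f y\<bar> powr q)"
      using assms by (simp add: sum.insert)
  qed
  also have "\<dots> = (\<Sum>x\<in>N. \<bar>f a + f x\<bar> powr q) + PS q N f"
    unfolding PS_def by (simp add: sum.distrib add.commute)
  finally show ?thesis by simp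
qed

lemma HS_insert: "finite N \<Longrightarrow> a \<notin> N \<Longrightarrow> HS q (insert a N) f = \<bar>f a\<bar> powr q + HS q N f"
  by (simp add: HS_def)

lemma PS_cong: "(\<And>x. x \<in> N \<Longrightarrow> f x = g x) \<Longrightarrow> PS q N f = PS q N g"
  unfolding PS_def by (intro sum.cong) auto

lemma HS_cong: "(\<And>x. x \<in> N \<Longrightarrow> f x = g x) \<Longrightarrow> HS q N f = HS q N g"
  unfolding HS_def by (intro sum.cong) auto

lemma merge_step:
  fixes q :: real and f :: "'b \<Rightarrow> real"
  assumes q: "0 < q" "q < 1" and fin: "finite N" and ab: "a \<in> N" "b \<in> N" "a \<noteq> b"
  shows "PS q N f - 2 * (real (card N) - 2) * HS q N f
     \<le> PS q (N - {b}) (f(a := f a + f b)) - 2 * (real (card N) - 3) * HS q (N - {b}) (f(a := f a + f b))"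
proof -
  define M where "M = N - {a, b}"
  define g where "g = f(a := f a + f b)"
  have finM: "finite M" using fin M_def by simp
  have aM: "a \<notin> M" "b \<notin> M" using M_def by auto
  have N: "N = insert a (insert b M)" using ab M_def by auto
  have N': "N - {b} = insert a M" using ab M_def by auto
  have cN: "real (card N) = real (card M) + 2" using N finM aM ab by simp
  have gM: "\<And>y. y \<in> M \<Longrightarrow> g y = f y" using aM g_def by auto
  define Sa where "Sa = (\<Sum>y\<in>M. \<bar>f a + f y\<bar> powr q)"
  define Sb where "Sb = (\<Sum>y\<in>M. \<bar>f b + f y\<bar> powr q)"
  define Sab where "Sab = (\<Sum>y\<in>M. \<bar>f a + f b + f y\<bar> powr q)"
  define H where "H = HS q M f"
  define P where "P = PS q M f"
  define k where "k = real (card M)"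
  have PN: "PS q N f = P + 2 * Sb + 2 * (\<bar>f a + f b\<bar> powr q + Sa)"
    unfolding N P_def Sa_def Sb_def using finM aM ab
    by (simp add: PS_insert sum.insert)
  have PN': "PS q (N - {b}) g = P + 2 * Sab"
  proof -
    have "PS q (N - {b}) g = PS q M g + 2 * (\<Sum>y\<in>M. \<bar>g a + g y\<bar> powr q)"
      unfolding N' using finM aM by (simp add: PS_insert)
    moreover have "PS q M g = P" unfolding P_def by (rule PS_cong) (simp add: gM)
    moreover have "(\<Sum>y\<in>M. \<bar>g a + g y\<bar> powr q) = Sab" unfolding Sab_def
      by (rule sum.cong) (use aM in \<open>auto simp: g_def\<close>)
    ultimately show ?thesis by simp
  qed
  have HN: "HS q N f = \<bar>f a\<bar> powr q + \<bar>f b\<bar> powr q + H"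
    unfolding N H_def using finM aM ab by (simp add: HS_insert)
  have HN': "HS q (N - {b}) g = \<bar>f a + f b\<bar> powr q + H"
  proof -
    have "HS q (N - {b}) g = \<bar>g a\<bar> powr q + HS q M g" unfolding N' using finM aM by (simp add: HS_insert)
    moreover have "HS q M g = H" unfolding H_def by (rule HS_cong) (simp add: gM)
    ultimately show ?thesis by (simp add: g_def)
  qed
  have hl: "(\<Sum>y\<in>M. \<bar>f a + f b\<bar> powr q + \<bar>f a + f y\<bar> powr q + \<bar>f b + f y\<bar> powr q)
      \<le> (\<Sum>y\<in>M. \<bar>f a\<bar> powr q + \<bar>f b\<bar> powr q + \<bar>f y\<bar> powr q + \<bar>f a + f b + f y\<bar> powr q)"
    by (rule sum_mono) (rule hl_le[OF q])
  then have hl': "k * \<bar>f a + f b\<bar> powr q + Sa + Sb \<le> k * (\<bar>f a\<bar> powr q + \<bar>f b\<bar> powr q) + H + Sab"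
    unfolding k_def Sa_def Sb_def Sab_def H_def HS_def by (simp add: sum.distrib algebra_simps)
  show ?thesis
    unfolding g_def[symmetric] PN PN' HN HN' cN k_def[symmetric]
    using hl' by (simp add: algebra_simps)
qed

lemma card4_strict:
  fixes q :: real and f :: "'b \<Rightarrow> real"
  assumes q: "0 < q" "q < 1" and c: "card N = 4" and nz: "\<And>x. x \<in> N \<Longrightarrow> f x \<noteq> 0"
    and s: "(\<Sum>x\<in>N. f x) = 0"
  shows "PS q N f < 4 * HS q N f"
proof -
  obtain a B where B: "N = insert a B" "a \<notin> B" "card B = 3"
    using c card_Suc_eq[of N 3] by auto
  then obtain b c d where bcd: "B = {b, c, d}" "b \<noteq> c" "c \<noteq> d" "b \<noteq> d"
    using card_3_iff[of B] by auto
  have dist: "a \<noteq> b" "a \<noteq> c" "a \<noteq> d" using B bcd by auto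
  have N: "N = {a, b, c, d}" using B bcd by simp
  have sd: "f a + f b + f c + f d = 0" using s dist bcd unfolding N by simp
  have PS: "PS q N f = 2 * (\<bar>f c + f d\<bar> powr q) + 2 * (\<bar>f b + f c\<bar> powr q + \<bar>f b + f d\<bar> powr q)
      + 2 * (\<bar>f a + f b\<bar> powr q + \<bar>f a + f c\<bar> powr q + \<bar>f a + f d\<bar> powr q)"
    unfolding N using dist bcd by (simp add: PS_insert PS_empty)
  have HS: "HS q N f = \<bar>f a\<bar> powr q + \<bar>f b\<bar> powr q + \<bar>f c\<bar> powr q + \<bar>f d\<bar> powr q"
    unfolding N HS_def using dist bcd by simp
  have e1: "\<bar>f c + f d\<bar> powr q = \<bar>f a + f b\<bar> powr q" by (rule absneg) (use sd in linarith)
  have e2: "\<bar>f b + f d\<bar> powr q = \<bar>f a + f c\<bar> powr q" by (rule absneg) (use sd in linarith)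
  have e3: "\<bar>f a + f d\<bar> powr q = \<bar>f b + f c\<bar> powr q" by (rule absneg) (use sd in linarith)
  have "\<bar>f a + f b\<bar> powr q + \<bar>f a + f c\<bar> powr q + \<bar>f b + f c\<bar> powr q < \<bar>f a\<bar> powr q + \<bar>f b\<bar> powr q + \<bar>f c\<bar> powr q + \<bar>f d\<bar> powr q"
    by (rule hl4[OF q]) (use nz N sd in auto)
  then show ?thesis unfolding PS HS e1 e2 e3 by (simp only: distrib_left)
qed

lemma same_sign_pair:
  fixes f :: "'b \<Rightarrow> real"
  assumes "card N \<ge> 3" "\<And>x. x \<in> N \<Longrightarrow> f x \<noteq> 0"
  shows "\<exists>a\<in>N. \<exists>b\<in>N. a \<noteq> b \<and> f a * f b > 0"
proof -
  obtain B where "B \<subseteq> N" "card B = 3" using obtain_subset_with_card_n[OF assms(1)] by auto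
  then obtain a b c where "a \<in> N" "b \<in> N" "c \<in> N" "a \<noteq> b" "b \<noteq> c" "a \<noteq> c"
    using card_3_iff[of B] by auto
  moreover have "f a * f b > 0 \<or> f a * f c > 0 \<or> f b * f c > 0"
    using assms(2)[OF \<open>a \<in> N\<close>] assms(2)[OF \<open>b \<in> N\<close>] assms(2)[OF \<open>c \<in> N\<close>]
    by (auto simp: zero_less_mult_iff linorder_neq_iff)
  ultimately show ?thesis by blast
qed

lemma psi_strict:
  fixes q :: real and f :: "'b \<Rightarrow> real"
  assumes q: "0 < q" "q < 1"
  shows "finite N \<Longrightarrow> card N \<ge> 4 \<Longrightarrow> (\<And>x. x \<in> N \<Longrightarrow> f x \<noteq> 0) \<Longrightarrow> (\<Sum>x\<in>N. f x) = 0
    \<Longrightarrow> PS q N f < 2 * (real (card N) - 2) * HS q N f"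
proof (induction "card N" arbitrary: N f rule: less_induct)
  case less
  show ?case
  proof (cases "card N = 4")
    case True
    then show ?thesis using card4_strict[OF q True less.prems(3,4)] by simp
  next
    case False
    then have c5: "card N \<ge> 5" using less.prems(2) by simp
    obtain a b where ab: "a \<in> N" "b \<in> N" "a \<noteq> b" "f a * f b > 0"
      using same_sign_pair[of N f] c5 less.prems(3) by force
    define g where "g = f(a := f a + f b)"
    have cN': "card (N - {b}) = card N - 1" using ab less.prems(1) by simp
    have nz: "\<And>x. x \<in> N - {b} \<Longrightarrow> g x \<noteq> 0"
    proof -
      fix x assume x: "x \<in> N - {b}"
      show "g x \<noteq> 0"
      proof (cases "x = a")
        case True
        have "f a + f b \<noteq> 0" using ab(4) by (auto simp: zero_less_mult_iff)
        then show ?thesis using True g_def by simp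
      qed (use x less.prems(3) g_def in auto)
    qed
    have s': "(\<Sum>x\<in>N - {b}. g x) = 0"
    proof -
      have e1: "N - {b} = insert a (N - {a, b})" using ab by auto
      have "(\<Sum>x\<in>N - {b}. g x) = g a + (\<Sum>x\<in>N - {a, b}. g x)"
        unfolding e1 using less.prems(1) by (subst sum.insert) auto
      also have "(\<Sum>x\<in>N - {a, b}. g x) = (\<Sum>x\<in>N - {a, b}. f x)" by (rule sum.cong) (auto simp: g_def)
      have e2: "N = insert a (insert b (N - {a, b}))" using ab by auto
      have "(\<Sum>x\<in>N. f x) = f a + f b + (\<Sum>x\<in>N - {a, b}. f x)"
        using less.prems(1) ab by (subst e2) (simp add: sum.insert)
      ultimately show ?thesis using less.prems(4) g_def by simp
    qed
    have IH: "PS q (N - {b}) g < 2 * (real (card (N - {b})) - 2) * HS q (N - {b}) g"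
      by (rule less.hyps) (use cN' c5 less.prems(1) nz s' in auto)
    have cc: "real (card N) = real (card (N - {b})) + 1" using cN' c5 by simp
    define H' where "H' = HS q (N - {b}) g"
    define P' where "P' = PS q (N - {b}) g"
    define n' where "n' = real (card (N - {b}))"
    have M: "PS q N f - 2 * (real (card N) - 2) * HS q N f \<le> P' - 2 * (real (card N) - 3) * H'"
      using merge_step[OF q less.prems(1) ab(1,2,3), of f] unfolding g_def H'_def P'_def by simp
    have "2 * (real (card N) - 3) * H' = 2 * (n' - 2) * H'" unfolding cc n'_def by (simp add: algebra_simps)
    moreover have "P' < 2 * (n' - 2) * H'" using IH unfolding P'_def H'_def n'_def by simp
    ultimately show ?thesis using M by linarith
  qed
qed

lemma norm_sub_le:
  fixes y e :: "'a::real_inner"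
  assumes y: "y \<noteq> 0" and e: "norm e = 1" and eps: "0 \<le> \<epsilon>" "\<epsilon> \<le> norm y"
  shows "norm (y - \<epsilon> *\<^sub>R e) \<le> norm y - \<epsilon> * inner y e / norm y + \<epsilon>\<^sup>2 / (2 * norm y)"
proof -
  define A where "A = norm y"
  define B where "B = \<epsilon> * inner y e / A"
  define C where "C = \<epsilon>\<^sup>2 / (2 * A)"
  have A: "A > 0" using y A_def by simp
  have iy: "\<bar>inner y e\<bar> \<le> A" using Cauchy_Schwarz_ineq2[of y e] e A_def by simp
  have "B \<le> \<epsilon>"
  proof -
    have "\<epsilon> * inner y e \<le> \<epsilon> * A" using iy eps by (intro mult_left_mono) auto
    then show ?thesis unfolding B_def using A by (simp add: divide_le_eq)
  qed
  moreover have "C \<ge> 0" unfolding C_def using A by simp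
  ultimately have R: "A - B + C \<ge> 0" using eps A_def by linarith
  have ee: "inner e e = 1" using e by (simp add: norm_eq_sqrt_inner)
  have "inner (y - \<epsilon> *\<^sub>R e) (y - \<epsilon> *\<^sub>R e) = A\<^sup>2 - 2 * \<epsilon> * inner y e + \<epsilon>\<^sup>2"
  proof -
    have yy: "inner y y = A\<^sup>2" unfolding A_def by (simp add: power2_norm_eq_inner)
    show ?thesis by (simp add: inner_diff_left inner_diff_right ee yy inner_commute power2_eq_square algebra_simps)
  qed
  also have "\<dots> = (A - B + C)\<^sup>2 - (B - C)\<^sup>2"
    unfolding B_def C_def using A by (simp add: power2_eq_square field_simps)
  also have "\<dots> \<le> (A - B + C)\<^sup>2" by simp
  finally have "norm (y - \<epsilon> *\<^sub>R e) \<le> A - B + C" using R by (subst norm_le_square) simp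
  then show ?thesis unfolding A_def B_def C_def .
qed

lemma pair_sum_sq:
  fixes w :: "'b \<Rightarrow> 'a::real_inner"
  assumes fin: "finite N"
  shows "(\<Sum>x\<in>N. \<Sum>y\<in>N-{x}. (norm (w x + w y))\<^sup>2)
     = 2 * (real (card N) - 2) * (\<Sum>x\<in>N. (norm (w x))\<^sup>2) + 2 * (norm (\<Sum>x\<in>N. w x))\<^sup>2"
proof -
  have sq: "(norm (u + t))\<^sup>2 = (norm u)\<^sup>2 + (norm t)\<^sup>2 + 2 * inner u t" for u t :: 'a
    by (simp add: power2_norm_eq_inner inner_add_left inner_add_right inner_commute)
  have inner_rm: "(\<Sum>y\<in>N-{x}. g y) = (\<Sum>y\<in>N. g y) - g x" if "x \<in> N" for x and g :: "'b \<Rightarrow> real"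
    using that fin by (simp add: sum_diff1)
  have "(\<Sum>x\<in>N. \<Sum>y\<in>N-{x}. (norm (w x + w y))\<^sup>2)
      = (\<Sum>x\<in>N. (\<Sum>y\<in>N. (norm (w x))\<^sup>2 + (norm (w y))\<^sup>2 + 2 * inner (w x) (w y)) - (4 * (norm (w x))\<^sup>2))"
  proof (rule sum.cong[OF refl])
    fix x assume x: "x \<in> N"
    have "inner (w x) (w x) = (norm (w x))\<^sup>2" by (simp add: power2_norm_eq_inner)
    then show "(\<Sum>y\<in>N-{x}. (norm (w x + w y))\<^sup>2) = (\<Sum>y\<in>N. (norm (w x))\<^sup>2 + (norm (w y))\<^sup>2 + 2 * inner (w x) (w y)) - (4 * (norm (w x))\<^sup>2)"
      unfolding sq using inner_rm[OF x] by simp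
  qed
  also have "\<dots> = 2 * real (card N) * (\<Sum>x\<in>N. (norm (w x))\<^sup>2) + 2 * (\<Sum>x\<in>N. \<Sum>y\<in>N. inner (w x) (w y)) - 4 * (\<Sum>x\<in>N. (norm (w x))\<^sup>2)"
    by (simp add: sum.distrib sum_subtractf sum_distrib_left sum_distrib_right sum.swap[of "\<lambda>x y. (norm (w y))\<^sup>2"] algebra_simps)
  also have "(\<Sum>x\<in>N. \<Sum>y\<in>N. inner (w x) (w y)) = (norm (\<Sum>x\<in>N. w x))\<^sup>2"
    by (simp only: power2_norm_eq_inner inner_sum_left inner_sum_right; rule sum.swap)
  finally show ?thesis by (simp add: algebra_simps)
qed

lemma first_order:
  fixes v a b :: "'a::euclidean_space"
  assumes finV: "finite V" and av: "a \<noteq> v" and bv: "b \<noteq> v" and ca: "ca \<ge> 0" and cb: "cb \<ge> 0" and K: "K \<ge> 0"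
    and H: "\<And>w. w \<notin> V \<Longrightarrow> 0 \<le> ca * (dist a w - dist a v) + cb * (dist b w - dist b v) + K * dist v w"
  shows "norm ((ca / norm (a - v)) *\<^sub>R (a - v) + (cb / norm (b - v)) *\<^sub>R (b - v)) \<le> K"
proof (rule ccontr)
  define W where "W = (ca / norm (a - v)) *\<^sub>R (a - v) + (cb / norm (b - v)) *\<^sub>R (b - v)"
  define nW where "nW = norm W"
  assume "\<not> ?thesis"
  then have gt: "nW > K" unfolding nW_def W_def by simp
  then have W0: "W \<noteq> 0" using K nW_def by auto
  define e where "e = W /\<^sub>R nW"
  have ne: "norm e = 1" unfolding e_def nW_def using W0 by simp
  define na where "na = norm (a - v)"
  define nb where "nb = norm (b - v)"
  have na: "na > 0" "nb > 0" using av bv na_def nb_def by auto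
  define C where "C = ca / (2 * na) + cb / (2 * nb)"
  have C: "C \<ge> 0" unfolding C_def using na ca cb by simp
  define \<delta> where "\<delta> = min (min na nb) ((nW - K) / (C + 1))"
  have \<delta>: "\<delta> > 0" unfolding \<delta>_def using na gt C by simp
  define T where "T = (\<lambda>x. inner (x - v) e) ` V"
  have "finite T" unfolding T_def using finV by simp
  then obtain \<epsilon> where eps: "\<epsilon> \<in> {0<..<\<delta>}" "\<epsilon> \<notin> T"
    using infinite_Ioo[OF \<delta>] by (meson finite_subset subsetI)
  define w where "w = v + \<epsilon> *\<^sub>R e"
  have wV: "w \<notin> V"
  proof
    assume "w \<in> V"
    then have "inner (w - v) e \<in> T" unfolding T_def by simp
    moreover have "inner (w - v) e = \<epsilon>" unfolding w_def using ne by (simp add: norm_eq_sqrt_inner)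
    ultimately show False using eps by simp
  qed
  have e0: "0 < \<epsilon>" "\<epsilon> < \<delta>" using eps by auto
  have da: "dist a w \<le> na - \<epsilon> * inner (a - v) e / na + \<epsilon>\<^sup>2 / (2 * na)"
  proof -
    have "dist a w = norm ((a - v) - \<epsilon> *\<^sub>R e)" unfolding w_def dist_norm by (simp add: algebra_simps)
    also have "\<dots> \<le> norm (a - v) - \<epsilon> * inner (a - v) e / norm (a - v) + \<epsilon>\<^sup>2 / (2 * norm (a - v))" using norm_sub_le[of "a - v" e \<epsilon>] av ne e0 \<delta>_def na_def by simp
    finally show ?thesis unfolding na_def .
  qed
  have db: "dist b w \<le> nb - \<epsilon> * inner (b - v) e / nb + \<epsilon>\<^sup>2 / (2 * nb)"
  proof -
    have "dist b w = norm ((b - v) - \<epsilon> *\<^sub>R e)" unfolding w_def dist_norm by (simp add: algebra_simps)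
    also have "\<dots> \<le> norm (b - v) - \<epsilon> * inner (b - v) e / norm (b - v) + \<epsilon>\<^sup>2 / (2 * norm (b - v))" using norm_sub_le[of "b - v" e \<epsilon>] bv ne e0 \<delta>_def nb_def by simp
    finally show ?thesis unfolding nb_def .
  qed
  have dv: "dist v w = \<epsilon>" unfolding w_def dist_norm using ne e0 by simp
  have "0 \<le> ca * (dist a w - na) + cb * (dist b w - nb) + K * \<epsilon>"
    using H[OF wV] dv unfolding na_def nb_def by (simp add: dist_norm)
  also have "\<dots> \<le> ca * (- \<epsilon> * inner (a - v) e / na + \<epsilon>\<^sup>2 / (2 * na)) + cb * (- \<epsilon> * inner (b - v) e / nb + \<epsilon>\<^sup>2 / (2 * nb)) + K * \<epsilon>"
  proof -
    have "ca * (dist a w - na) \<le> ca * (- \<epsilon> * inner (a - v) e / na + \<epsilon>\<^sup>2 / (2 * na))"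
      by (rule mult_left_mono[OF _ ca]) (use da in simp)
    moreover have "cb * (dist b w - nb) \<le> cb * (- \<epsilon> * inner (b - v) e / nb + \<epsilon>\<^sup>2 / (2 * nb))"
      by (rule mult_left_mono[OF _ cb]) (use db in simp)
    ultimately show ?thesis by linarith
  qed
  also have "\<dots> = \<epsilon> * (K - inner W e) + \<epsilon>\<^sup>2 * C"
  proof -
    have iW: "inner W e = ca * inner (a - v) e / na + cb * inner (b - v) e / nb"
      unfolding W_def na_def nb_def by (simp only: inner_add_left inner_scaleR_left) simp
    show ?thesis unfolding iW C_def using na by (simp add: field_simps power2_eq_square)
  qed
  also have "inner W e = nW" unfolding e_def nW_def using W0 by (simp add: power2_norm_eq_inner[symmetric] power2_eq_square)
  finally have "0 \<le> \<epsilon> * (K - nW + \<epsilon> * C)" by (simp add: power2_eq_square algebra_simps)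
  moreover have "\<epsilon> * C < nW - K"
  proof -
    have "\<epsilon> < (nW - K) / (C + 1)" using e0 \<delta>_def by simp
    then have "\<epsilon> * (C + 1) < nW - K" using C by (simp add: field_simps)
    then show ?thesis using e0 by (simp add: algebra_simps)
  qed
  ultimately show False using e0 mult_pos_neg[of \<epsilon> "K - nW + \<epsilon> * C"] by linarith
qed

definition odiag :: "'a set \<Rightarrow> ('a \<times> 'a) set" where
  "odiag V = {(x, y). x \<in> V \<and> y \<in> V \<and> x \<noteq> y}"

definition edges_of :: "'a set \<Rightarrow> ('a \<Rightarrow> 'a \<Rightarrow> real) \<Rightarrow> 'a set set" where
  "edges_of V g = {{x, y} | x y. x \<in> V \<and> y \<in> V \<and> x \<noteq> y \<and> g x y \<noteq> 0}"

definition gc :: "real \<Rightarrow> 'a::real_normed_vector set \<Rightarrow> ('a \<Rightarrow> 'a \<Rightarrow> real) \<Rightarrow> real" where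
  "gc p V g = (1/2) * (\<Sum>(x, y)\<in>odiag V. \<bar>g x y\<bar> powr p * dist x y)"

lemma finite_odiag: "finite V \<Longrightarrow> finite (odiag V)"
  by (rule finite_subset[of _ "V \<times> V"]) (auto simp: odiag_def)

lemma finite_edges_of: "finite V \<Longrightarrow> finite (edges_of V g)"
  by (rule finite_subset[of _ "Pow V"]) (auto simp: edges_of_def)

lemma edges_bij:
  assumes fin: "finite V" and z: "z \<in> V" and anti: "\<And>x y. g x y = - g y x"
  shows "bij_betw (\<lambda>x. {x, z}) {x \<in> V - {z}. g x z \<noteq> 0} {e \<in> edges_of V g. z \<in> e}"
  unfolding bij_betw_def
proof
  show "inj_on (\<lambda>x. {x, z}) {x \<in> V - {z}. g x z \<noteq> 0}"
    by (auto simp: inj_on_def doubleton_eq_iff)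
  show "(\<lambda>x. {x, z}) ` {x \<in> V - {z}. g x z \<noteq> 0} = {e \<in> edges_of V g. z \<in> e}"
  proof
    show "(\<lambda>x. {x, z}) ` {x \<in> V - {z}. g x z \<noteq> 0} \<subseteq> {e \<in> edges_of V g. z \<in> e}"
      using z by (auto simp: edges_of_def)
  next
    show "{e \<in> edges_of V g. z \<in> e} \<subseteq> (\<lambda>x. {x, z}) ` {x \<in> V - {z}. g x z \<noteq> 0}"
    proof
      fix e assume "e \<in> {e \<in> edges_of V g. z \<in> e}"
      then obtain x y where e: "e = {x, y}" "x \<in> V" "y \<in> V" "x \<noteq> y" "g x y \<noteq> 0" "z \<in> e"
        unfolding edges_of_def by auto
      show "e \<in> (\<lambda>x. {x, z}) ` {x \<in> V - {z}. g x z \<noteq> 0}"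
      proof (cases "z = y")
        case True
        then show ?thesis using e by auto
      next
        case False
        then have "z = x" using e by auto
        moreover have "g y x \<noteq> 0" using e anti[of y x] by simp
        ultimately have "y \<in> {x \<in> V - {z}. g x z \<noteq> 0}" "e = {y, z}" using e by auto
        then show ?thesis by blast
      qed
    qed
  qed
qed

lemma balance_edges:
  assumes fin: "finite V" and z: "z \<in> V" and anti: "\<And>x y. g x y = - g y x"
  shows "(\<Sum>e\<in>edges_of V g. if z \<in> e then (\<Sum>x\<in>e - {z}. g x z) else 0) = (\<Sum>x\<in>V-{z}. g x z)"
proof -
  have "(\<Sum>e\<in>edges_of V g. if z \<in> e then (\<Sum>x\<in>e - {z}. g x z) else 0)
      = (\<Sum>e\<in>{e \<in> edges_of V g. z \<in> e}. (\<Sum>x\<in>e - {z}. g x z))"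
    using finite_edges_of[OF fin] by (simp add: sum.inter_filter)
  also have "\<dots> = (\<Sum>x\<in>{x \<in> V - {z}. g x z \<noteq> 0}. (\<Sum>y\<in>{x, z} - {z}. g y z))"
    by (rule sum.reindex_bij_betw[OF edges_bij[of V z g, OF fin z anti], symmetric])
  also have "\<dots> = (\<Sum>x\<in>{x \<in> V - {z}. g x z \<noteq> 0}. g x z)"
    by (rule sum.cong) (auto simp: insert_Diff_if)
  also have "\<dots> = (\<Sum>x\<in>V-{z}. g x z)"
    by (rule sum.mono_neutral_left) (use fin in auto)
  finally show ?thesis .
qed

lemma darts_edges_of:
  assumes anti: "\<And>x y. g x y = - g y x"
  shows "darts (edges_of V g) = {(x, y) \<in> odiag V. g x y \<noteq> 0}"
proof (rule set_eqI)
  fix d :: "'a \<times> 'a"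
  obtain x y where d: "d = (x, y)" by (cases d)
  have "(x \<noteq> y \<and> {x, y} \<in> edges_of V g) \<longleftrightarrow> (x \<in> V \<and> y \<in> V \<and> x \<noteq> y \<and> g x y \<noteq> 0)"
  proof
    assume H: "x \<noteq> y \<and> {x, y} \<in> edges_of V g"
    then obtain x' y' where e: "{x, y} = {x', y'}" "x' \<in> V" "y' \<in> V" "x' \<noteq> y'" "g x' y' \<noteq> 0"
      unfolding edges_of_def by auto
    then have "(x = x' \<and> y = y') \<or> (x = y' \<and> y = x')" by (auto simp: doubleton_eq_iff)
    then show "x \<in> V \<and> y \<in> V \<and> x \<noteq> y \<and> g x y \<noteq> 0" using e H anti[of y' x'] by auto
  next
    assume "x \<in> V \<and> y \<in> V \<and> x \<noteq> y \<and> g x y \<noteq> 0"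
    then show "x \<noteq> y \<and> {x, y} \<in> edges_of V g" unfolding edges_of_def by blast
  qed
  then show "d \<in> darts (edges_of V g) \<longleftrightarrow> d \<in> {(x, y) \<in> odiag V. g x y \<noteq> 0}"
    unfolding d darts_def odiag_def by auto
qed

lemma cost_edges_of:
  assumes fin: "finite V" and anti: "\<And>x y. g x y = - g y x" and p: "p > 0"
  shows "gilbert_cost p (edges_of V g) g = gc p V g"
proof -
  have "(\<Sum>(x, y)\<in>darts (edges_of V g). \<bar>g x y\<bar> powr p * dist x y) = (\<Sum>(x, y)\<in>odiag V. \<bar>g x y\<bar> powr p * dist x y)"
    unfolding darts_edges_of[OF anti]
    by (rule sum.mono_neutral_left) (use finite_odiag[OF fin] in auto)
  then show ?thesis unfolding gilbert_cost_def gc_def by simp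
qed

lemma flow_of:
  assumes fin: "finite V" and supp: "supp_fun (\<lambda>x. \<mu>p x - \<mu>m x) \<subseteq> V"
    and anti: "\<And>x y. g x y = - g y x"
    and bal: "\<And>z. z \<in> V \<Longrightarrow> \<mu>p z - \<mu>m z = (\<Sum>x\<in>V-{z}. g x z)"
  shows "is_flow \<mu>p \<mu>m V (edges_of V g) g"
  unfolding is_flow_def
proof (intro conjI allI ballI)
  show "finite V" by fact
  show "supp_fun (\<lambda>x. \<mu>p x - \<mu>m x) \<subseteq> V" by fact
  fix e assume "e \<in> edges_of V g"
  then show "\<exists>x y. e = {x, y} \<and> x \<noteq> y \<and> x \<in> V \<and> y \<in> V \<and> g x y \<noteq> 0" unfolding edges_of_def by blast
next
  fix x y show "g x y = - g y x" by (rule anti)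
next
  fix z
  show "\<mu>p z - \<mu>m z = (\<Sum>e\<in>edges_of V g. if z \<in> e then \<Sum>x\<in>e - {z}. g x z else 0)"
  proof (cases "z \<in> V")
    case True
    then show ?thesis using balance_edges[of V z g, OF fin True anti] bal[OF True] by simp
  next
    case False
    then have "\<mu>p z - \<mu>m z = 0" using supp unfolding supp_fun_def by auto
    moreover have "\<forall>e\<in>edges_of V g. z \<notin> e" using False unfolding edges_of_def by auto
    ultimately show ?thesis by simp
  qed
qed

lemma orig_flow:
  assumes fl: "is_flow \<mu>p \<mu>m V E m"
    and m0: "m0 = (\<lambda>x y. if {x, y} \<in> E then m x y else 0)"
  shows "E = edges_of V m0" and "\<And>x y. m0 x y = - m0 y x"
    and "\<And>z. z \<in> V \<Longrightarrow> \<mu>p z - \<mu>m z = (\<Sum>x\<in>V-{z}. m0 x z)"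
    and "p > 0 \<Longrightarrow> gilbert_cost p E m = gc p V m0"
    and "\<And>x y. m0 x y \<noteq> 0 \<Longrightarrow> x \<in> V \<and> y \<in> V \<and> x \<noteq> y"
proof -
  have fin: "finite V" and anti0: "\<And>x y. m x y = - m y x"
    and edg: "\<And>e. e \<in> E \<Longrightarrow> \<exists>x y. e = {x, y} \<and> x \<noteq> y \<and> x \<in> V \<and> y \<in> V \<and> m x y \<noteq> 0"
    and bal: "\<And>z. \<mu>p z - \<mu>m z = (\<Sum>e\<in>E. if z \<in> e then (\<Sum>x\<in>e - {z}. m x z) else 0)"
    using fl unfolding is_flow_def by blast+
  show anti: "\<And>x y. m0 x y = - m0 y x"
  proof -
    fix x y show "m0 x y = - m0 y x" unfolding m0 using anti0[of x y] by (simp add: insert_commute)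
  qed
  show EE: "E = edges_of V m0"
  proof
    show "E \<subseteq> edges_of V m0"
    proof
      fix e assume e: "e \<in> E"
      then obtain x y where "e = {x, y}" "x \<noteq> y" "x \<in> V" "y \<in> V" "m x y \<noteq> 0" using edg by blast
      then show "e \<in> edges_of V m0" unfolding edges_of_def m0 using e by auto
    qed
    show "edges_of V m0 \<subseteq> E" unfolding edges_of_def m0 by (auto split: if_splits)
  qed
  show supp0: "\<And>x y. m0 x y \<noteq> 0 \<Longrightarrow> x \<in> V \<and> y \<in> V \<and> x \<noteq> y"
  proof -
    fix x y assume "m0 x y \<noteq> 0"
    then have "{x, y} \<in> E" unfolding m0 by (auto split: if_splits)
    then obtain x' y' where "{x, y} = {x', y'}" "x' \<noteq> y'" "x' \<in> V" "y' \<in> V" using edg by blast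
    then show "x \<in> V \<and> y \<in> V \<and> x \<noteq> y" by (auto simp: doubleton_eq_iff)
  qed
  show "\<And>z. z \<in> V \<Longrightarrow> \<mu>p z - \<mu>m z = (\<Sum>x\<in>V-{z}. m0 x z)"
  proof -
    fix z assume z: "z \<in> V"
    have "(\<Sum>e\<in>E. if z \<in> e then (\<Sum>x\<in>e - {z}. m x z) else 0) = (\<Sum>e\<in>E. if z \<in> e then (\<Sum>x\<in>e - {z}. m0 x z) else 0)"
    proof (rule sum.cong[OF refl])
      fix e assume e: "e \<in> E"
      show "(if z \<in> e then (\<Sum>x\<in>e - {z}. m x z) else 0) = (if z \<in> e then (\<Sum>x\<in>e - {z}. m0 x z) else 0)"
      proof (cases "z \<in> e")
        case True
        obtain x y where xy: "e = {x, y}" "x \<noteq> y" using edg[OF e] by blast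
        have "\<And>u. u \<in> e - {z} \<Longrightarrow> {u, z} = e" using True xy by auto
        then have "\<And>u. u \<in> e - {z} \<Longrightarrow> m0 u z = m u z" unfolding m0 using e by auto
        then show ?thesis by simp
      qed simp
    qed
    also have "\<dots> = (\<Sum>x\<in>V-{z}. m0 x z)" unfolding EE by (rule balance_edges[of V z m0, OF fin z anti])
    finally show "\<mu>p z - \<mu>m z = (\<Sum>x\<in>V-{z}. m0 x z)" using bal[of z] EE by simp
  qed
  assume p: "p > 0"
  have "gilbert_cost p E m = gilbert_cost p E m0"
    unfolding gilbert_cost_def
    by (rule arg_cong[where f = "\<lambda>t. 1/2 * t"], rule sum.cong) (auto simp: darts_def m0)
  also have "\<dots> = gc p V m0" using cost_edges_of[of V m0 p, OF fin anti p] EE by simp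
  finally show "gilbert_cost p E m = gc p V m0" .
qed

definition edf :: "'a \<Rightarrow> 'a \<Rightarrow> real \<Rightarrow> 'a \<Rightarrow> 'a \<Rightarrow> real" where
  "edf p q t x y = (if x = p \<and> y = q then t else 0) - (if x = q \<and> y = p then t else 0)"

definition cyc :: "'a \<Rightarrow> 'a \<Rightarrow> 'a \<Rightarrow> real \<Rightarrow> 'a \<Rightarrow> 'a \<Rightarrow> real" where
  "cyc p q r t x y = edf p q t x y + edf q r t x y + edf r p t x y"

lemma edf_anti: "edf p q t x y = - edf p q t y x"
  unfolding edf_def by (cases "x = p"; cases "y = q"; cases "x = q"; cases "y = p") auto

lemma cyc_anti: "cyc p q r t x y = - cyc p q r t y x"
proof -
  have "edf p q t x y = - edf p q t y x" "edf q r t x y = - edf q r t y x" "edf r p t x y = - edf r p t y x"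
    by (rule edf_anti)+
  then show ?thesis unfolding cyc_def by linarith
qed

lemma sum_if_pair:
  assumes "finite A"
  shows "(\<Sum>x\<in>A-{z}. if x = p \<and> z = q then t else 0) = (if z = q \<and> p \<in> A \<and> p \<noteq> z then (t::real) else 0)"
proof (cases "z = q")
  case True
  then have "(\<Sum>x\<in>A-{z}. if x = p \<and> z = q then t else 0) = (\<Sum>x\<in>A-{z}. if x = p then t else 0)" by simp
  also have "\<dots> = (if p \<in> A - {z} then t else 0)" using assms by (simp add: sum.delta)
  finally show ?thesis using True by auto
qed simp

lemma edf_sum:
  assumes "finite A" "p \<noteq> q"
  shows "(\<Sum>x\<in>A-{z}. edf p q t x z) = (if z = q \<and> p \<in> A then t else 0) - (if z = p \<and> q \<in> A then t else 0)"
proof -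
  have "(\<Sum>x\<in>A-{z}. edf p q t x z) = (\<Sum>x\<in>A-{z}. if x = p \<and> z = q then t else 0) - (\<Sum>x\<in>A-{z}. if x = q \<and> z = p then t else 0)"
    unfolding edf_def by (rule sum_subtractf)
  also have "\<dots> = (if z = q \<and> p \<in> A \<and> p \<noteq> z then t else 0) - (if z = p \<and> q \<in> A \<and> q \<noteq> z then t else 0)"
    using sum_if_pair[OF assms(1)] by simp
  finally show ?thesis using assms(2) by auto
qed

lemma cyc_sum:
  assumes "finite A" "p \<in> A" "q \<in> A" "r \<in> A" "p \<noteq> q" "q \<noteq> r" "p \<noteq> r"
  shows "(\<Sum>x\<in>A-{z}. cyc p q r t x z) = 0"
proof -
  have "(\<Sum>x\<in>A-{z}. cyc p q r t x z) = (\<Sum>x\<in>A-{z}. edf p q t x z) + (\<Sum>x\<in>A-{z}. edf q r t x z) + (\<Sum>x\<in>A-{z}. edf r p t x z)"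
    unfolding cyc_def by (simp add: sum.distrib)
  also have "\<dots> = 0" using assms by (simp add: edf_sum)
  finally show ?thesis .
qed

lemma notin_ne: "a \<notin> S \<Longrightarrow> b \<in> S \<Longrightarrow> a \<noteq> b" by auto

lemma edf_zero: "\<not> (x = p \<and> y = q) \<Longrightarrow> \<not> (x = q \<and> y = p) \<Longrightarrow> edf p q t x y = 0"
  unfolding edf_def by (simp only: if_not_P)

lemma cyc_zero:
  assumes "(x, y) \<notin> {(p, q), (q, p), (q, r), (r, q), (r, p), (p, r)}"
  shows "cyc p q r t x y = 0"
proof -
  let ?S = "{(p, q), (q, p), (q, r), (r, q), (r, p), (p, r)}"
  have m: "(p, q) \<in> ?S" "(q, p) \<in> ?S" "(q, r) \<in> ?S" "(r, q) \<in> ?S" "(r, p) \<in> ?S" "(p, r) \<in> ?S" by blast+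
  have h: "(x, y) \<noteq> (p, q)" "(x, y) \<noteq> (q, p)" "(x, y) \<noteq> (q, r)" "(x, y) \<noteq> (r, q)" "(x, y) \<noteq> (r, p)" "(x, y) \<noteq> (p, r)"
    using notin_ne[OF assms m(1)] notin_ne[OF assms m(2)] notin_ne[OF assms m(3)] notin_ne[OF assms m(4)]
      notin_ne[OF assms m(5)] notin_ne[OF assms m(6)] by blast+
  note h' = h[unfolded prod.inject]
  have "edf p q t x y = 0" using h'(1,2) by (rule edf_zero)
  moreover have "edf q r t x y = 0" using h'(3,4) by (rule edf_zero)
  moreover have "edf r p t x y = 0" using h'(5,6) by (rule edf_zero)
  ultimately show ?thesis unfolding cyc_def by simp
qed

lemma perturb:
  fixes \<mu>p \<mu>m :: "'a::euclidean_space \<Rightarrow> real" and m m0 :: "'a \<Rightarrow> 'a \<Rightarrow> real"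
  assumes gs: "gilbert_steiner_solution p \<mu>p \<mu>m V E m" and p: "p > 0"
    and m0: "m0 = (\<lambda>x y. if {x, y} \<in> E then m x y else 0)"
    and v: "v \<in> V" and a: "a \<in> V" "a \<noteq> v" and b: "b \<in> V" "b \<noteq> v" and ab: "a \<noteq> b" and w: "w \<notin> V"
  shows "0 \<le> \<bar>m0 a v\<bar> powr p * (dist a w - dist a v) + \<bar>m0 b v\<bar> powr p * (dist b w - dist b v)
            + \<bar>m0 a v + m0 b v\<bar> powr p * dist v w"
proof -
  have fl: "is_flow \<mu>p \<mu>m V E m"
    and opt: "\<And>V' E' m'. is_flow \<mu>p \<mu>m V' E' m' \<Longrightarrow> gilbert_cost p E m \<le> gilbert_cost p E' m'"
    using gs unfolding gilbert_steiner_solution_def by blast+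
  note O = orig_flow[OF fl m0]
  have fin: "finite V" and supp: "supp_fun (\<lambda>x. \<mu>p x - \<mu>m x) \<subseteq> V" using fl unfolding is_flow_def by blast+
  define fa where "fa = m0 a v"
  define fb where "fb = m0 b v"
  define V1 where "V1 = insert w V"
  define g1 where "g1 = (\<lambda>x y. m0 x y + cyc a w v fa x y + cyc b w v fb x y)"
  have wd: "w \<noteq> a" "w \<noteq> b" "w \<noteq> v" "a \<noteq> w" "b \<noteq> w" "v \<noteq> w" using a b v w by auto
  have m0w: "m0 x w = 0" "m0 w x = 0" for x using O(5)[of x w] O(5)[of w x] w by auto
  have fin1: "finite V1" using fin V1_def by simp
  have supp1: "supp_fun (\<lambda>x. \<mu>p x - \<mu>m x) \<subseteq> V1" using supp V1_def by auto
  have anti1: "\<And>x y. g1 x y = - g1 y x"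
  proof -
    fix x y
    have "m0 x y = - m0 y x" "cyc a w v fa x y = - cyc a w v fa y x" "cyc b w v fb x y = - cyc b w v fb y x"
      by (rule O(2), rule cyc_anti, rule cyc_anti)
    then show "g1 x y = - g1 y x" unfolding g1_def by linarith
  qed
  have bal1: "\<mu>p z - \<mu>m z = (\<Sum>x\<in>V1-{z}. g1 x z)" if z: "z \<in> V1" for z
  proof -
    have c1: "(\<Sum>x\<in>V1-{z}. cyc a w v fa x z) = 0"
      by (rule cyc_sum) (use fin1 V1_def a v wd in auto)
    have c2: "(\<Sum>x\<in>V1-{z}. cyc b w v fb x z) = 0"
      by (rule cyc_sum) (use fin1 V1_def b v wd in auto)
    have s0: "(\<Sum>x\<in>V1-{z}. m0 x z) = \<mu>p z - \<mu>m z"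
    proof (cases "z = w")
      case True
      then have "\<mu>p z - \<mu>m z = 0" using supp w unfolding supp_fun_def by auto
      then show ?thesis using True m0w by simp
    next
      case False
      then have zV: "z \<in> V" using z V1_def by simp
      have "V1 - {z} = insert w (V - {z})" using False V1_def by auto
      then have "(\<Sum>x\<in>V1-{z}. m0 x z) = m0 w z + (\<Sum>x\<in>V-{z}. m0 x z)" using fin w by simp
      then show ?thesis using m0w O(3)[OF zV] by simp
    qed
    show ?thesis unfolding g1_def sum.distrib c1 c2 s0 by simp
  qed
  have F1: "is_flow \<mu>p \<mu>m V1 (edges_of V1 g1) g1"
    using flow_of[OF fin1 supp1 anti1 bal1] .
  have "gc p V m0 \<le> gc p V1 g1"
    using opt[OF F1] O(4)[OF p] cost_edges_of[of V1 g1 p, OF fin1 anti1 p] by simp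
  moreover have "gc p V m0 = gc p V1 m0"
    unfolding gc_def
  proof (rule arg_cong[where f = "\<lambda>t. 1/2 * t"], rule sum.mono_neutral_left)
    show "finite (odiag V1)" using finite_odiag[OF fin1] .
    show "odiag V \<subseteq> odiag V1" unfolding odiag_def V1_def by auto
    show "\<forall>i\<in>odiag V1 - odiag V. (case i of (x, y) \<Rightarrow> \<bar>m0 x y\<bar> powr p * dist x y) = 0"
      unfolding odiag_def V1_def using m0w by auto
  qed
  moreover have "gc p V1 g1 - gc p V1 m0 = \<bar>fa\<bar> powr p * (dist a w - dist a v) + \<bar>fb\<bar> powr p * (dist b w - dist b v)
            + \<bar>fa + fb\<bar> powr p * dist v w"
  proof -
    define D where "D = (\<lambda>(x, y). \<bar>g1 x y\<bar> powr p * dist x y - \<bar>m0 x y\<bar> powr p * dist x y)"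
    define Q where "Q = {(a, v), (v, a), (b, v), (v, b), (a, w), (w, a), (b, w), (w, b), (v, w), (w, v)}"
    have "gc p V1 g1 - gc p V1 m0 = 1/2 * (\<Sum>d\<in>odiag V1. D d)"
      unfolding gc_def D_def by (simp add: sum_subtractf case_prod_beta algebra_simps)
    also have "(\<Sum>d\<in>odiag V1. D d) = (\<Sum>d\<in>Q. D d)"
    proof (rule sum.mono_neutral_right)
      show "finite (odiag V1)" using finite_odiag[OF fin1] .
      show "Q \<subseteq> odiag V1" unfolding Q_def odiag_def V1_def using a b v ab wd by auto
      show "\<forall>i\<in>odiag V1 - Q. D i = 0"
      proof
        fix i assume i: "i \<in> odiag V1 - Q"
        obtain x y where xy: "i = (x, y)" by (cases i)
        have sub1: "{(a, w), (w, a), (w, v), (v, w), (v, a), (a, v)} \<subseteq> Q" unfolding Q_def by auto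
        have sub2: "{(b, w), (w, b), (w, v), (v, w), (v, b), (b, v)} \<subseteq> Q" unfolding Q_def by auto
        have "cyc a w v fa x y = 0" by (rule cyc_zero) (use i xy subsetD[OF sub1] in blast)
        moreover have "cyc b w v fb x y = 0" by (rule cyc_zero) (use i xy subsetD[OF sub2] in blast)
        ultimately show "D i = 0" unfolding D_def xy g1_def by simp
      qed
    qed
    also have "(\<Sum>d\<in>Q. D d) = 2 * (\<bar>fa\<bar> powr p * (dist a w - dist a v) + \<bar>fb\<bar> powr p * (dist b w - dist b v)
            + \<bar>fa + fb\<bar> powr p * dist v w)"
    proof -
      have m0v: "m0 v a = - fa" "m0 v b = - fb" using O(2)[of v a] O(2)[of v b] fa_def fb_def by auto
      have ne: "a \<noteq> v" "v \<noteq> a" "b \<noteq> v" "v \<noteq> b" "a \<noteq> b" "b \<noteq> a" using a b ab by auto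
      have nab: "\<bar>- fa - fb\<bar> = \<bar>fa + fb\<bar>" by arith
      show ?thesis unfolding Q_def D_def g1_def using ne wd
        by (simp add: nab cyc_def edf_def m0w m0v fa_def[symmetric] fb_def[symmetric] dist_commute algebra_simps)
    qed
    finally show ?thesis by simp
  qed
  ultimately show ?thesis unfolding fa_def fb_def by linarith
qed


theorem corollary1:
  fixes \<mu>p \<mu>m :: "'a::euclidean_space \<Rightarrow> real"
    and V :: "'a set" and E :: "'a set set" and m :: "'a \<Rightarrow> 'a \<Rightarrow> real"
    and p :: real and v :: 'a
  assumes "DIM('a) \<ge> 2"
    and "0 < p" and "p < 1/2"
    and "fin_measure \<mu>p" and "fin_measure \<mu>m"
    and "(\<Sum>x\<in>supp_fun \<mu>p. \<mu>p x) = (\<Sum>x\<in>supp_fun \<mu>m. \<mu>m x)"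
    and "gilbert_steiner_solution p \<mu>p \<mu>m V E m"
    and "branching_point \<mu>p \<mu>m V E v"
    and "vdegree E v \<noteq> 2"
  shows "vdegree E v = 3"
proof -
  have p: "0 < p" "p < 1/2" using assms(2,3) by auto
  note gs = assms(7)
  have fl: "is_flow \<mu>p \<mu>m V E m" using gs unfolding gilbert_steiner_solution_def by blast
  have fin: "finite V" using fl unfolding is_flow_def by blast
  define m0 where "m0 = (\<lambda>x y. if {x, y} \<in> E then m x y else 0)"
  note O = orig_flow[OF fl m0_def]
  have vV: "v \<in> V" and vs: "\<mu>p v = 0" "\<mu>m v = 0" and deg1: "vdegree E v \<ge> 1"
    using assms(8) unfolding branching_point_def supp_fun_def by auto
  define Nb where "Nb = {x \<in> V - {v}. m0 x v \<noteq> 0}"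
  define f where "f = (\<lambda>x. m0 x v)"
  have finNb: "finite Nb" unfolding Nb_def using fin by simp
  have NbV: "x \<in> V" "x \<noteq> v" if "x \<in> Nb" for x using that unfolding Nb_def by auto
  have nz: "f x \<noteq> 0" if "x \<in> Nb" for x using that unfolding Nb_def f_def by auto
  have bij: "bij_betw (\<lambda>x. {x, v}) Nb {e \<in> edges_of V m0. v \<in> e}"
    unfolding Nb_def by (rule edges_bij[of V v m0, OF fin vV O(2)])
  have kdeg: "card Nb = vdegree E v"
    using bij_betw_same_card[OF bij] O(1) unfolding vdegree_def by simp
  have sum0: "(\<Sum>x\<in>Nb. f x) = 0"
  proof -
    have "(\<Sum>x\<in>Nb. f x) = (\<Sum>x\<in>V-{v}. m0 x v)"
      unfolding f_def Nb_def by (rule sum.mono_neutral_left) (use fin in auto)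
    also have "\<dots> = \<mu>p v - \<mu>m v" using O(3)[OF vV] by simp
    finally show ?thesis using vs by simp
  qed
  have k1: "card Nb \<noteq> 1"
  proof
    assume "card Nb = 1"
    then obtain x where "Nb = {x}" by (rule card_1_singletonE)
    then show False using sum0 nz[of x] by simp
  qed
  have k0: "card Nb \<noteq> 0" using kdeg deg1 by simp
  have k2: "card Nb \<noteq> 2" using kdeg assms(9) by simp
  have "\<not> card Nb \<ge> 4"
  proof
    assume k4: "card Nb \<ge> 4"
    define q where "q = 2 * p"
    have q: "0 < q" "q < 1" using p q_def by auto
    define wv where "wv = (\<lambda>x. (\<bar>f x\<bar> powr p / norm (x - v)) *\<^sub>R (x - v))"
    have nwv: "(norm (wv x))\<^sup>2 = \<bar>f x\<bar> powr q" if "x \<in> Nb" for x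
    proof -
      have "norm (x - v) > 0" using NbV[OF that] by simp
      then have "norm (wv x) = \<bar>f x\<bar> powr p" unfolding wv_def by simp
      then show ?thesis unfolding q_def by (simp add: power2_eq_square powr_add[symmetric])
    qed
    have pb: "(norm (wv a + wv b))\<^sup>2 \<le> \<bar>f a + f b\<bar> powr q" if ab: "a \<in> Nb" "b \<in> Nb" "a \<noteq> b" for a b
    proof -
      have "norm (wv a + wv b) \<le> \<bar>f a + f b\<bar> powr p"
        unfolding wv_def
      proof (rule first_order[OF fin])
        show "a \<noteq> v" "b \<noteq> v" using NbV ab by auto
        show "\<bar>f a\<bar> powr p \<ge> 0" "\<bar>f b\<bar> powr p \<ge> 0" "\<bar>f a + f b\<bar> powr p \<ge> 0" by simp_all
        fix w assume w: "w \<notin> V"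
        have aV: "a \<in> V" "a \<noteq> v" "b \<in> V" "b \<noteq> v" using NbV ab by auto
        show "0 \<le> \<bar>f a\<bar> powr p * (dist a w - dist a v) + \<bar>f b\<bar> powr p * (dist b w - dist b v)
            + \<bar>f a + f b\<bar> powr p * dist v w"
          unfolding f_def by (rule perturb[OF gs p(1) m0_def vV aV(1,2) aV(3,4) ab(3) w])
      qed
      then have "(norm (wv a + wv b))\<^sup>2 \<le> (\<bar>f a + f b\<bar> powr p)\<^sup>2"
        by (intro power_mono) auto
      then show ?thesis unfolding q_def by (simp add: power2_eq_square powr_add[symmetric])
    qed
    have "2 * (real (card Nb) - 2) * HS q Nb f \<le> (\<Sum>x\<in>Nb. \<Sum>y\<in>Nb-{x}. (norm (wv x + wv y))\<^sup>2)"
    proof -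
      have "HS q Nb f = (\<Sum>x\<in>Nb. (norm (wv x))\<^sup>2)" unfolding HS_def by (rule sum.cong) (auto simp: nwv)
      moreover have "0 \<le> 2 * (norm (\<Sum>x\<in>Nb. wv x))\<^sup>2" by simp
      ultimately show ?thesis using pair_sum_sq[OF finNb, of wv] by simp
    qed
    also have "\<dots> \<le> PS q Nb f"
      unfolding PS_def by (intro sum_mono) (auto intro: pb)
    also have "PS q Nb f < 2 * (real (card Nb) - 2) * HS q Nb f"
      by (rule psi_strict[OF q finNb k4 nz sum0])
    finally show False by simp
  qed
  then show ?thesis using k0 k1 k2 kdeg by linarith
qed

end
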